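(* Let $\Omega$ be either $\mathbb R^n$ or a cube in $\mathbb R^n$, let $r\ge1$, and let $f$ be measurable on $\Omega$. The following are equivalent: (i) $f\in\mathcal M^r_{A_1}(\Omega)$; (ii) $M_\Omega(|f|^r)\in\mathcal M_{A_1}(\Omega)$; (iii) $M_\Omega f\in\mathcal M^r_{A_1}(\Omega)$.
   Context: Cubes have sides parallel to the axes. A weight on a cube $Q$ is an a.e. positive function in $L^1(Q)$; a weight on $\mathbb R^n$ is an a.e. positive function in $L^1_{\mathrm{loc}}(\mathbb R^n)$. $M_\Omega g(x)=\sup\{|Q'|^{-1}\int_{Q'}|g|: Q'\subset\Omega \text{ a cube}, x\in Q'\}$. $A_1(\Omega)$ is the class of weights $w$ on $\Omega$ with $M_\Omega w\le Cw$ a.e. on $\Omega$ for some constant $C$. For $0<r<\infty$, $\mathcal M^r_{A_1}(\Omega)$ is the set of measurable $g$ on $\Omega$ for which there exists $w\in A_1(\Omega)$ with $|g|^r\le w$ a.e. on $\Omega$, and $\mathcal M_{A_1}(\Omega)=\mathcal M^1_{A_1}(\Omega)$. *)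

theory Defs
  imports "HOL-Analysis.Analysis"
begin

definition is_cube :: "'a::euclidean_space set \<Rightarrow> bool" where
  "is_cube Q \<longleftrightarrow> (\<exists>a l. l > 0 \<and> Q = cbox a (a + l *\<^sub>R One))"

definition maxfun :: "'a::euclidean_space set \<Rightarrow> ('a \<Rightarrow> real) \<Rightarrow> 'a \<Rightarrow> ennreal" where
  "maxfun \<Omega> g x =
     (SUP Q \<in> {Q. is_cube Q \<and> Q \<subseteq> \<Omega> \<and> x \<in> Q}.
        (\<integral>\<^sup>+ y \<in> Q. ennreal \<bar>g y\<bar> \<partial>lebesgue) / emeasure lebesgue Q)"

text \<open>Weights on Omega (Omega = R^n or a cube): a.e. positive and integrable on every cube
  contained in Omega (for a cube Omega this is L^1(Omega); for R^n it is L^1_loc).\<close>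
definition weight :: "'a::euclidean_space set \<Rightarrow> ('a \<Rightarrow> real) \<Rightarrow> bool" where
  "weight \<Omega> w \<longleftrightarrow>
     (AE x in lebesgue. x \<in> \<Omega> \<longrightarrow> w x > 0) \<and>
     (\<forall>Q. is_cube Q \<and> Q \<subseteq> \<Omega> \<longrightarrow> set_integrable lebesgue Q w)"

definition A1 :: "'a::euclidean_space set \<Rightarrow> ('a \<Rightarrow> real) set" where
  "A1 \<Omega> = {w. weight \<Omega> w \<and>
      (\<exists>C::real. AE x in lebesgue. x \<in> \<Omega> \<longrightarrow> maxfun \<Omega> w x \<le> ennreal C * ennreal (w x))}"

definition MA1 :: "real \<Rightarrow> 'a::euclidean_space set \<Rightarrow> ('a \<Rightarrow> real) \<Rightarrow> bool" where
  "MA1 r \<Omega> g \<longleftrightarrow> g \<in> borel_measurable (restrict_space lebesgue \<Omega>) \<and>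
     (\<exists>w \<in> A1 \<Omega>. AE x in lebesgue. x \<in> \<Omega> \<longrightarrow> \<bar>g x\<bar> powr r \<le> w x)"

text \<open>Membership of an extended-valued function (such as a maximal function) in M^r_{A_1}:
  it must be finite a.e. on Omega (forced by |G|^r \<le> w) and its real part belongs to the class.\<close>
definition MA1_ext :: "real \<Rightarrow> 'a::euclidean_space set \<Rightarrow> ('a \<Rightarrow> ennreal) \<Rightarrow> bool" where
  "MA1_ext r \<Omega> G \<longleftrightarrow> (AE x in lebesgue. x \<in> \<Omega> \<longrightarrow> G x < \<infinity>) \<and>
     MA1 r \<Omega> (\<lambda>x. enn2real (G x))"

end

theory Submission
  imports Defs
begin

definition cube :: "'a::euclidean_space \<Rightarrow> real \<Rightarrow> 'a set" where
  "cube x h = cbox (x - h *\<^sub>R One) (x + h *\<^sub>R One)"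

lemma emeasure_cube:
  fixes x :: "'a::euclidean_space"
  assumes "h \<ge> 0"
  shows "emeasure lebesgue (cube x h) = ennreal ((2*h)^DIM('a))"
proof -
  have "emeasure lebesgue (cube x h) = emeasure lborel (cube x h)"
    unfolding cube_def by simp
  also have "\<dots> = ennreal ((2*h)^DIM('a))"
    using assms unfolding cube_def emeasure_lborel_cbox_eq
    by (simp add: inner_diff_left inner_add_left algebra_simps)
  finally show ?thesis .
qed

lemma measure_cube:
  fixes x :: "'a::euclidean_space"
  assumes "h \<ge> 0"
  shows "measure lebesgue (cube x h) = (2*h)^DIM('a)"
  using emeasure_cube[OF assms, of x] assms
  by (simp add: measure_def)

lemma cube_lmeasurable[simp]: "cube x h \<in> lmeasurable"
  unfolding cube_def by simp

lemma cube_sets[simp]: "cube x h \<in> sets lebesgue"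
  unfolding cube_def by simp

lemma ball_sub_cube: "ball x d \<subseteq> cube x d"
proof
  fix y assume "y \<in> ball x d"
  then have "norm (y - x) < d" by (simp add: dist_norm norm_minus_commute)
  then have "\<bar>(y - x) \<bullet> b\<bar> \<le> d" if "b \<in> Basis" for b
    using Basis_le_norm[OF that, of "y - x"] by linarith
  then show "y \<in> cube x d"
    unfolding cube_def mem_box by (auto simp: inner_diff_left inner_add_left abs_le_iff algebra_simps)
qed

lemma cube_sub_ball:
  assumes "d > 0"
  shows "cube x (d / (2 * DIM('a))) \<subseteq> ball (x::'a::euclidean_space) d"
proof
  fix y assume "y \<in> cube x (d / (2 * DIM('a)))"
  then have b: "\<bar>(y - x) \<bullet> b\<bar> \<le> d / (2 * DIM('a))" if "b \<in> Basis" for b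
    using that unfolding cube_def mem_box by (auto simp: inner_diff_left inner_add_left abs_le_iff algebra_simps)
  have "norm (y - x) \<le> (\<Sum>b\<in>Basis. \<bar>(y - x) \<bullet> b\<bar>)" by (rule norm_le_l1)
  also have "\<dots> \<le> (\<Sum>b\<in>(Basis::'a set). d / (2 * DIM('a)))" by (rule sum_mono) (use b in auto)
  also have "\<dots> = d / 2" by simp
  also have "\<dots> < d" using assms by simp
  finally show "y \<in> ball x d" by (simp add: dist_norm norm_minus_commute)
qed

lemma density_cubes:
  fixes E :: "'a::euclidean_space set"
  assumes E: "E \<in> sets lebesgue" and \<eta>: "\<eta> > 0" and k: "k > 0"
  shows "negligible {x\<in>E. \<forall>h. 0<h \<and> h<k \<longrightarrow>
           \<eta> * measure lebesgue (cube x h) \<le> measure lebesgue (cube x h - E)}"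
proof -
  define S where "S = {x\<in>E. \<forall>h. 0<h \<and> h<k \<longrightarrow>
           \<eta> * measure lebesgue (cube x h) \<le> measure lebesgue (cube x h - E)}"
  define \<kappa> where "\<kappa> = (2 * real DIM('a))^DIM('a) / \<eta>"
  have \<kappa>: "\<kappa> > 0" unfolding \<kappa>_def using \<eta> by simp
  have key: "measure lebesgue (ball x d) \<le> \<kappa> * measure lebesgue (ball x d - E)"
    if x: "x \<in> S" and d: "0<d" "d<k" for x d
  proof -
    define h where "h = d / (2*DIM('a))"
    have D: "2 * real DIM('a) \<ge> 1" using DIM_positive[where 'a='a] by linarith
    have hpos: "0 < h" using d unfolding h_def by simp
    have hd: "h * (2 * real DIM('a)) = d" unfolding h_def by simp
    have "h * 1 \<le> h * (2 * real DIM('a))" using D hpos by (intro mult_left_mono) linarith+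
    then have h: "0 < h" "h < k" using hd hpos d by linarith+
    have Em: "E \<in> sets lebesgue" by (rule E)
    have "measure lebesgue (ball x d) \<le> measure lebesgue (cube x d)"
      by (rule measure_mono_fmeasurable) (auto simp: ball_sub_cube)
    also have "\<dots> = (2 * real DIM('a))^DIM('a) * (2*h)^DIM('a)"
    proof -
      have "2 * d = (2 * real DIM('a)) * (2*h)" using hd by (simp add: algebra_simps)
      then have "(2*d)^DIM('a) = (2 * real DIM('a))^DIM('a) * (2*h)^DIM('a)"
        by (simp only: power_mult_distrib)
      then show ?thesis using d by (simp add: measure_cube)
    qed
    also have "\<dots> \<le> (2 * real DIM('a))^DIM('a) * (measure lebesgue (cube x h - E) / \<eta>)"
    proof -
      have "\<eta> * measure lebesgue (cube x h) \<le> measure lebesgue (cube x h - E)"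
        using x h unfolding S_def by auto
      then have "(2*h)^DIM('a) \<le> measure lebesgue (cube x h - E) / \<eta>"
        using \<eta> h by (simp add: measure_cube pos_le_divide_eq mult.commute)
      then show ?thesis by (intro mult_left_mono) auto
    qed
    also have "\<dots> \<le> (2 * real DIM('a))^DIM('a) * (measure lebesgue (ball x d - E) / \<eta>)"
    proof -
      have "measure lebesgue (cube x h - E) \<le> measure lebesgue (ball x d - E)"
        apply (rule measure_mono_fmeasurable)
        using cube_sub_ball[OF d(1), of x] E by (auto simp: h_def intro!: fmeasurable_Diff)
      then show ?thesis using \<eta> by (intro mult_left_mono divide_right_mono) auto
    qed
    also have "\<dots> = \<kappa> * measure lebesgue (ball x d - E)" unfolding \<kappa>_def by simp
    finally show ?thesis .
  qed
  show ?thesis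
    unfolding S_def[symmetric] negligible_outer_le
  proof (intro allI impI)
    fix e :: real assume e: "e > 0"
    obtain U where U: "open U" "E \<subseteq> U" "U - E \<in> lmeasurable"
       "emeasure lebesgue (U - E) < ennreal (e/\<kappa>)"
      using sets_lebesgue_outer_open[OF E, of "e/\<kappa>"] e \<kappa> by auto
    define K where "K = {(x,d). x \<in> S \<and> 0 < d \<and> d < k \<and> ball x d \<subseteq> U}"
    have fine: "\<exists>i. i \<in> K \<and> x \<in> ball (fst i) (snd i) \<and> snd i < d" if "x \<in> S" "0 < d" for x d
    proof -
      have "x \<in> U" using that U(2) unfolding S_def by auto
      then obtain \<epsilon> where \<epsilon>: "\<epsilon> > 0" "ball x \<epsilon> \<subseteq> U" using U(1) open_contains_ball by blast
      define d' where "d' = min (min d k) \<epsilon> / 2"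
      have "d' > 0" "d' < d" "d' < k" "d' \<le> \<epsilon>" using \<epsilon> that k by (auto simp: d'_def)
      then show ?thesis using that \<epsilon>
        by (intro exI[of _ "(x, d')"]) (auto simp: K_def)
    qed
    obtain C where C: "countable C" "C \<subseteq> K"
      "pairwise (\<lambda>i j. disjnt (ball (fst i) (snd i)) (ball (fst j) (snd j))) C"
      "negligible (S - (\<Union>i\<in>C. ball (fst i) (snd i)))"
      by (rule Vitali_covering_theorem_balls[of S K fst snd, OF fine])
    define B where "B i = ball (fst i) (snd i)" for i :: "'a \<times> real"
    have disj: "disjoint_family_on B C"
      using C(3) unfolding disjoint_family_on_def pairwise_def disjnt_def B_def by blast
    have disj2: "disjoint_family_on (\<lambda>i. B i - E) C"
      using disj unfolding disjoint_family_on_def by blast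
    have BK: "B i \<subseteq> U \<and> fst i \<in> S \<and> 0 < snd i \<and> snd i < k" if "i \<in> C" for i
      using C(2) that by (cases i) (auto simp: K_def B_def)
    have "emeasure lebesgue (\<Union>(B`C)) = (\<integral>\<^sup>+ i. emeasure lebesgue (B i) \<partial>count_space C)"
      by (rule emeasure_UN_countable) (use C(1) disj in \<open>auto simp: B_def\<close>)
    also have "\<dots> \<le> (\<integral>\<^sup>+ i. ennreal \<kappa> * emeasure lebesgue (B i - E) \<partial>count_space C)"
    proof (rule nn_integral_mono)
      fix i assume "i \<in> space (count_space C)"
      then have i: "i \<in> C" by simp
      have m1: "B i \<in> lmeasurable" by (simp add: B_def)
      have m2: "B i - E \<in> lmeasurable" using m1 E by (intro fmeasurable_Diff)
      have "measure lebesgue (B i) \<le> \<kappa> * measure lebesgue (B i - E)"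
        using key[of "fst i" "snd i"] BK[OF i] by (simp add: B_def)
      then show "emeasure lebesgue (B i) \<le> ennreal \<kappa> * emeasure lebesgue (B i - E)"
        using m1 m2 \<kappa> by (simp add: emeasure_eq_measure2 ennreal_mult[symmetric])
    qed
    also have "\<dots> = ennreal \<kappa> * (\<integral>\<^sup>+ i. emeasure lebesgue (B i - E) \<partial>count_space C)"
      by (rule nn_integral_cmult) simp
    also have "(\<integral>\<^sup>+ i. emeasure lebesgue (B i - E) \<partial>count_space C) = emeasure lebesgue (\<Union>i\<in>C. B i - E)"
      by (rule emeasure_UN_countable[symmetric]) (use C(1) disj2 E in \<open>auto simp: B_def\<close>)
    also have "emeasure lebesgue (\<Union>i\<in>C. B i - E) \<le> emeasure lebesgue (U - E)"
      by (rule emeasure_mono) (use BK U E in auto)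
    finally have "emeasure lebesgue (\<Union>(B`C)) \<le> ennreal \<kappa> * emeasure lebesgue (U - E)"
      by (simp add: mult_left_mono)
    also have "\<dots> \<le> ennreal \<kappa> * ennreal (e/\<kappa>)"
      using U(4) by (intro mult_left_mono) auto
    also have "\<dots> = ennreal (\<kappa> * (e / \<kappa>))" using \<kappa> e by (subst ennreal_mult) auto
    also have "\<dots> = ennreal e" using \<kappa> by simp
    finally have em: "emeasure lebesgue (\<Union>(B`C)) \<le> ennreal e" .
    have Bs: "\<Union>(B`C) \<in> sets lebesgue" using C(1) by (auto simp: B_def intro!: sets.countable_UN')
    have Bf: "\<Union>(B`C) \<in> lmeasurable" using em Bs by (intro fmeasurableI) (auto intro: le_less_trans)
    define N where "N = S - \<Union>(B`C)"
    have N: "negligible N" using C(4) by (simp add: N_def B_def)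
    have Nf: "N \<in> lmeasurable" using N by (simp add: negligible_iff_null_sets fmeasurableI_null_sets)
    have "measure lebesgue (\<Union>(B`C)) \<le> e"
      using em Bf e by (simp add: emeasure_eq_measure2)
    moreover have "measure lebesgue (N \<union> \<Union>(B`C)) \<le> measure lebesgue N + measure lebesgue (\<Union>(B`C))"
      by (rule measure_Un_le) (use Nf Bf in auto)
    moreover have "measure lebesgue N = 0" using N by (rule negligible_imp_measure0)
    ultimately have "measure lebesgue (N \<union> \<Union>(B`C)) \<le> e" by linarith
    then show "\<exists>T. S \<subseteq> T \<and> T \<in> lmeasurable \<and> measure lebesgue T \<le> e"
    proof (intro exI[of _ "N \<union> \<Union>(B`C)"] conjI)
      show "S \<subseteq> N \<union> \<Union>(B`C)" by (auto simp: N_def)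
      show "N \<union> \<Union>(B`C) \<in> lmeasurable" using Nf Bf by (rule fmeasurable.Un)
    qed
  qed
qed

lemma cube_mono: "h \<le> h' \<Longrightarrow> cube x h \<subseteq> cube x h'"
  unfolding cube_def by (intro subset_box_imp) (auto simp: inner_diff_left inner_add_left)

lemma is_cube_cube: "h > 0 \<Longrightarrow> is_cube (cube (x::'a::euclidean_space) h)"
proof -
  assume h: "h > 0"
  have "(2*h) *\<^sub>R One = h *\<^sub>R One + h *\<^sub>R (One::'a)" by (simp add: scaleR_left_distrib[symmetric])
  then have eq: "x - h *\<^sub>R One + (2*h) *\<^sub>R One = x + h *\<^sub>R One" by simp
  have "cube x h = cbox (x - h *\<^sub>R One) (x - h *\<^sub>R One + (2*h) *\<^sub>R One)"
    unfolding cube_def by (simp only: eq)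
  then show ?thesis unfolding is_cube_def using h
    by (intro exI[of _ "x - h *\<^sub>R One"] exI[of _ "2*h"]) simp
qed

lemma cube_center: "h \<ge> 0 \<Longrightarrow> x \<in> cube x h"
  unfolding cube_def mem_box by (auto simp: inner_diff_left inner_add_left)

lemma interior_cube_nbhd:
  fixes x :: "'a::euclidean_space"
  assumes "x \<in> interior \<Omega>"
  obtains k where "k > 0" "\<And>h. 0 < h \<Longrightarrow> h < k \<Longrightarrow> cube x h \<subseteq> \<Omega>"
proof -
  obtain e where e: "e > 0" "ball x e \<subseteq> \<Omega>"
    using assms by (meson interior_subset open_contains_ball open_interior subset_trans)
  define k where "k = e / (2 * DIM('a))"
  have "k > 0" using e by (simp add: k_def)
  moreover have "cube x h \<subseteq> \<Omega>" if "0 < h" "h < k" for h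
    using cube_mono[of h k x] cube_sub_ball[OF e(1), of x] e(2) that by (simp add: k_def)
  ultimately show ?thesis using that by blast
qed

lemma omega_sets:
  assumes "\<Omega> = UNIV \<or> is_cube \<Omega>"
  shows "\<Omega> \<in> sets lebesgue"
  using assms unfolding is_cube_def by auto

lemma omega_frontier:
  assumes "\<Omega> = UNIV \<or> is_cube (\<Omega>::'a::euclidean_space set)"
  shows "negligible (\<Omega> - interior \<Omega>)"
  using assms unfolding is_cube_def by (auto simp: negligible_frontier_interval)

lemma maxfun_ge_avg:
  assumes "is_cube Q" "Q \<subseteq> \<Omega>" "x \<in> Q"
  shows "(\<integral>\<^sup>+ y \<in> Q. ennreal \<bar>g y\<bar> \<partial>lebesgue) / emeasure lebesgue Q \<le> maxfun \<Omega> g x"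
  unfolding maxfun_def by (rule SUP_upper) (use assms in auto)

lemma maxfun_ge:
  fixes \<Omega> :: "'a::euclidean_space set" and g :: "'a \<Rightarrow> real"
  assumes \<Omega>: "\<Omega> = UNIV \<or> is_cube \<Omega>" and g: "g \<in> borel_measurable (restrict_space lebesgue \<Omega>)"
  shows "AE x in lebesgue. x \<in> \<Omega> \<longrightarrow> ennreal \<bar>g x\<bar> \<le> maxfun \<Omega> g x"
proof -
  have \<Omega>s: "\<Omega> \<in> sets lebesgue" using omega_sets[OF \<Omega>] .
  define E where "E s = interior \<Omega> \<inter> {x \<in> \<Omega>. s < \<bar>g x\<bar>}" for s
  have Es: "E s \<in> sets lebesgue" for s
  proof -
    have "{x \<in> space (restrict_space lebesgue \<Omega>). s < \<bar>g x\<bar>} \<in> sets (restrict_space lebesgue \<Omega>)"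
      using g by measurable
    then have "{x \<in> \<Omega>. s < \<bar>g x\<bar>} \<in> sets lebesgue"
      using \<Omega>s by (simp add: sets_restrict_space_iff)
    then show ?thesis unfolding E_def by auto
  qed
  define F where "F = (\<lambda>(s::real, t::real, n::nat). if 0 \<le> t \<and> t < s then
     {x\<in>E s. \<forall>h. 0<h \<and> h < 1 / Suc n \<longrightarrow>
           ((s-t)/s) * measure lebesgue (cube x h) \<le> measure lebesgue (cube x h - E s)} else {})"
  have Fneg: "negligible (F i)" for i
  proof -
    obtain s t n where i: "i = (s, t, n)" by (cases i) auto
    show ?thesis
    proof (cases "0 \<le> t \<and> t < s")
      case True
      then have p: "(s-t)/s > 0" by simp
      show ?thesis unfolding i F_def prod.case if_P[OF True]
        by (rule density_cubes[OF Es p]) simp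
    next
      case False
      show ?thesis unfolding i F_def prod.case if_not_P[OF False] by simp
    qed
  qed
  define N where "N = (\<Omega> - interior \<Omega>) \<union> \<Union>(F ` (\<rat> \<times> \<rat> \<times> UNIV))"
  have N: "negligible N" unfolding N_def
    using omega_frontier[OF \<Omega>] Fneg
    by (intro negligible_Un negligible_countable_Union) (auto intro: countable_SIGMA countable_rat)
  have main: "ennreal \<bar>g x\<bar> \<le> maxfun \<Omega> g x" if x: "x \<in> \<Omega>" "x \<notin> N" for x
  proof (rule ccontr)
    assume "\<not> ?thesis"
    then have lt: "maxfun \<Omega> g x < ennreal \<bar>g x\<bar>" by simp
    define m where "m = enn2real (maxfun \<Omega> g x)"
    have mfin: "maxfun \<Omega> g x = ennreal m" using lt unfolding m_def
      by (metis ennreal_enn2real_if ennreal_less_top less_trans order_less_imp_not_less top.not_eq_extremum)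
    have m0: "m \<ge> 0" by (simp add: m_def)
    have mg: "m < \<bar>g x\<bar>" using lt mfin m0 by (simp add: ennreal_less_iff)
    obtain t where t: "t \<in> \<rat>" "m < t" "t < \<bar>g x\<bar>" using Rats_dense_in_real[OF mg] by blast
    obtain s where s: "s \<in> \<rat>" "t < s" "s < \<bar>g x\<bar>" using Rats_dense_in_real[OF t(3)] by blast
    have xi: "x \<in> interior \<Omega>" using x unfolding N_def by auto
    obtain k where k: "k > 0" "\<And>h. 0 < h \<Longrightarrow> h < k \<Longrightarrow> cube x h \<subseteq> \<Omega>"
      using interior_cube_nbhd[OF xi] by blast
    obtain n :: nat where n: "1 / Suc n < k" using k(1) by (meson nat_approx_posE)
    have t0: "0 \<le> t" using m0 t by simp
    have xE: "x \<in> E s" using xi x s unfolding E_def by auto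
    have "x \<notin> F (s, t, n)" using x(2) s(1) t(1) unfolding N_def by auto
    then obtain h where h: "0 < h" "h < 1 / Suc n"
      "\<not> ((s-t)/s) * measure lebesgue (cube x h) \<le> measure lebesgue (cube x h - E s)"
      using xE t0 s(2) unfolding F_def by auto
    define Q where "Q = cube x h"
    have QO: "Q \<subseteq> \<Omega>" using k(2)[of h] h n unfolding Q_def by linarith
    have Qc: "is_cube Q" "x \<in> Q" using h by (auto simp: Q_def is_cube_cube cube_center)
    have s0: "s > 0" using t0 s by simp
    define c where "c = measure lebesgue Q"
    have c0: "c > 0" using h by (simp add: c_def Q_def measure_cube)
    have QE: "Q \<inter> E s \<in> lmeasurable" "Q - E s \<in> lmeasurable"
      using Es[of s] by (auto simp: Q_def intro!: fmeasurable_Diff fmeasurableI2[OF cube_lmeasurable, of _ x h])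
    have "measure lebesgue (Q \<inter> E s) = c - measure lebesgue (Q - E s)"
    proof -
      have "Q - E s = Q - (Q \<inter> E s)" by auto
      then have "measure lebesgue (Q - E s) = c - measure lebesgue (Q \<inter> E s)"
        using QE by (simp add: c_def measurable_measure_Diff Q_def)
      then show ?thesis by simp
    qed
    also have "\<dots> > c - ((s-t)/s) * c" using h(3) unfolding Q_def c_def by simp
    finally have "measure lebesgue (Q \<inter> E s) > (t/s) * c" using s0 by (simp add: field_simps)
    then have "s * measure lebesgue (Q \<inter> E s) > t * c" using s0 by (simp add: field_simps)
    then have tlt: "t < s * measure lebesgue (Q \<inter> E s) / c" using c0 by (simp add: field_simps)
    have int: "ennreal (s * measure lebesgue (Q \<inter> E s)) \<le> (\<integral>\<^sup>+ y \<in> Q. ennreal \<bar>g y\<bar> \<partial>lebesgue)"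
    proof -
      have "ennreal (s * measure lebesgue (Q \<inter> E s)) = (\<integral>\<^sup>+ y \<in> Q \<inter> E s. ennreal s \<partial>lebesgue)"
        using QE s0 by (simp add: nn_integral_cmult_indicator emeasure_eq_measure2 ennreal_mult)
      also have "\<dots> \<le> (\<integral>\<^sup>+ y \<in> Q. ennreal \<bar>g y\<bar> \<partial>lebesgue)"
        by (rule nn_integral_mono) (auto simp: E_def indicator_def less_imp_le)
      finally show ?thesis .
    qed
    have "ennreal t < ennreal (s * measure lebesgue (Q \<inter> E s) / c)"
      using tlt t0 by (simp add: ennreal_less_iff)
    also have "\<dots> = ennreal (s * measure lebesgue (Q \<inter> E s)) / emeasure lebesgue Q"
      using c0 s0 by (simp add: divide_ennreal c_def emeasure_eq_measure2 Q_def)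
    also have "\<dots> \<le> (\<integral>\<^sup>+ y \<in> Q. ennreal \<bar>g y\<bar> \<partial>lebesgue) / emeasure lebesgue Q"
      by (rule divide_right_mono_ennreal[OF int])
    also have "\<dots> \<le> maxfun \<Omega> g x" by (rule maxfun_ge_avg[OF Qc(1) QO Qc(2)])
    finally have "ennreal t < ennreal m" using mfin by simp
    then show False using t(2) t0 by (simp add: ennreal_less_iff)
  qed
  show ?thesis
    by (rule AE_I'[of N]) (use N main in \<open>auto simp: negligible_iff_null_sets\<close>)
qed

lemma young1:
  fixes x r :: real
  assumes x: "x \<ge> 0" and r: "r \<ge> 1"
  shows "x \<le> x powr r / r + (1 - 1/r)"
proof (cases "x = 0")
  case True then show ?thesis using r by (simp add: field_simps)
next
  case False
  then have x0: "x > 0" using x by simp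
  show ?thesis
  proof (cases "r = 1")
    case True then show ?thesis using x by simp
  next
    case False
    then have r1: "r > 1" using r by simp
    have "(x powr r) powr (1/r) * 1 powr (1 - 1/r) \<le> (1/r) * x powr r + (1 - 1/r) * 1"
      using r1 x0 by (intro Youngs_inequality_0) (auto simp: field_simps)
    moreover have "(x powr r) powr (1/r) = x" using r1 x0 by (simp add: powr_powr)
    ultimately show ?thesis by simp
  qed
qed

lemma young_scaled:
  fixes y a r :: real
  assumes y: "y \<ge> 0" and a: "a > 0" and r: "r \<ge> 1"
  shows "y \<le> (a / (r * a powr r)) * y powr r + a * (1 - 1/r)"
proof -
  have "y / a \<le> (y/a) powr r / r + (1 - 1/r)" using young1[of "y/a" r] y a r by simp
  then have "a * (y / a) \<le> a * ((y/a) powr r / r + (1 - 1/r))" using a by (intro mult_left_mono) auto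
  moreover have "(y/a) powr r = y powr r / a powr r" using y a by (simp add: powr_divide)
  ultimately show ?thesis using a by (simp add: field_simps)
qed

lemma jensen_set:
  fixes f :: "'a::euclidean_space \<Rightarrow> real"
  assumes f: "f \<in> borel_measurable lebesgue" and r: "r \<ge> 1"
    and Q: "Q \<in> sets lebesgue" "emeasure lebesgue Q = ennreal c" "c > 0"
    and A: "(\<integral>\<^sup>+ y\<in>Q. ennreal (\<bar>f y\<bar> powr r) \<partial>lebesgue) = ennreal A" "A \<ge> 0"
  shows "(\<integral>\<^sup>+ y\<in>Q. ennreal \<bar>f y\<bar> \<partial>lebesgue) \<le> ennreal (c * (A/c) powr (1/r))"
proof (cases "A = 0")
  case True
  have "AE y in lebesgue. ennreal (\<bar>f y\<bar> powr r) * indicator Q y = 0"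
    using A True by (subst nn_integral_0_iff_AE[symmetric]) (use f Q in auto)
  then have "AE y in lebesgue. ennreal \<bar>f y\<bar> * indicator Q y = 0"
    by eventually_elim (auto simp: indicator_def ennreal_eq_0_iff)
  then have "(\<integral>\<^sup>+ y\<in>Q. ennreal \<bar>f y\<bar> \<partial>lebesgue) = 0"
    by (subst nn_integral_0_iff_AE) (use f Q in auto)
  then show ?thesis by simp
next
  case False
  then have A0: "A > 0" using A(2) by simp
  define a where "a = (A/c) powr (1/r)"
  have a0: "a > 0" using A0 Q(3) by (simp add: a_def)
  have ar: "a powr r = A / c" using A0 Q(3) r by (simp add: a_def powr_powr)
  define K where "K = a / (r * a powr r)"
  define L where "L = a * (1 - 1/r)"
  have K0: "K \<ge> 0" using a0 r by (simp add: K_def)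
  have L0: "L \<ge> 0" using r a0 by (simp add: L_def field_simps)
  have "(\<integral>\<^sup>+ y\<in>Q. ennreal \<bar>f y\<bar> \<partial>lebesgue) \<le>
        (\<integral>\<^sup>+ y. ennreal K * (ennreal (\<bar>f y\<bar> powr r) * indicator Q y) + ennreal L * indicator Q y \<partial>lebesgue)"
  proof (rule nn_integral_mono)
    fix y
    have "\<bar>f y\<bar> \<le> K * \<bar>f y\<bar> powr r + L"
      unfolding K_def L_def by (rule young_scaled) (use a0 r in auto)
    then have "ennreal \<bar>f y\<bar> \<le> ennreal K * ennreal (\<bar>f y\<bar> powr r) + ennreal L"
      using K0 L0 by (simp add: ennreal_mult[symmetric] ennreal_plus[symmetric] del: ennreal_plus)
    then show "ennreal \<bar>f y\<bar> * indicator Q y \<le> ennreal K * (ennreal (\<bar>f y\<bar> powr r) * indicator Q y) + ennreal L * indicator Q y"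
      by (auto simp: indicator_def)
  qed
  also have "\<dots> = ennreal K * (\<integral>\<^sup>+ y\<in>Q. ennreal (\<bar>f y\<bar> powr r) \<partial>lebesgue) + ennreal L * emeasure lebesgue Q"
    using f Q by (simp add: nn_integral_add nn_integral_cmult nn_integral_cmult_indicator)
  also have "\<dots> = ennreal K * ennreal A + ennreal L * ennreal c"
    using A Q by simp
  also have "\<dots> = ennreal (K * A + L * c)"
    using A(2) Q(3) K0 L0 by (simp add: ennreal_mult ennreal_plus)
  also have "K * A + L * c = c * a"
    using ar a0 Q(3) r A0 unfolding K_def L_def by (simp add: field_simps)
  finally show ?thesis by (simp add: a_def)
qed


lemma is_cube_meas:
  assumes "is_cube (Q::'a::euclidean_space set)"
  shows "Q \<in> sets lebesgue" "Q \<in> lmeasurable" "measure lebesgue Q > 0"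
    "emeasure lebesgue Q = ennreal (measure lebesgue Q)"
proof -
  obtain a l where al: "l > 0" "Q = cbox a (a + l *\<^sub>R One)" using assms unfolding is_cube_def by auto
  show "Q \<in> sets lebesgue" "Q \<in> lmeasurable" using al by auto
  then show "emeasure lebesgue Q = ennreal (measure lebesgue Q)" by (simp add: emeasure_eq_measure2)
  have "emeasure lebesgue Q = emeasure lborel Q" using al by simp
  also have "\<dots> = ennreal (l^DIM('a))"
    using al unfolding emeasure_lborel_cbox_eq by (simp add: inner_add_left)
  finally have "measure lebesgue Q = l^DIM('a)" using al by (simp add: measure_def)
  then show "measure lebesgue Q > 0" using al by simp
qed

lemma restrict_meas:
  assumes \<Omega>: "\<Omega> = UNIV \<or> is_cube \<Omega>" and f: "f \<in> borel_measurable (restrict_space lebesgue \<Omega>)"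
  shows "(\<lambda>y. indicator \<Omega> y * f y :: real) \<in> borel_measurable lebesgue"
proof -
  have O: "\<Omega> \<inter> space lebesgue \<in> sets lebesgue" using omega_sets[OF \<Omega>] by simp
  have "(\<lambda>x. indicat_real \<Omega> x *\<^sub>R f x) \<in> borel_measurable lebesgue"
    using borel_measurable_restrict_space_iff[OF O] f by blast
  then show ?thesis by simp
qed

lemma nn_integral_restrict_eq:
  assumes "Q \<subseteq> \<Omega>"
  shows "(\<integral>\<^sup>+ y\<in>Q. ennreal (h (indicator \<Omega> y * f y :: real)) \<partial>M) = (\<integral>\<^sup>+ y\<in>Q. ennreal (h (f y)) \<partial>M)"
  using assms by (intro nn_integral_cong) (auto simp: indicator_def)

lemma maxfun_jensen:
  fixes \<Omega> :: "'a::euclidean_space set" and f :: "'a \<Rightarrow> real"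
  assumes \<Omega>: "\<Omega> = UNIV \<or> is_cube \<Omega>" and f: "f \<in> borel_measurable (restrict_space lebesgue \<Omega>)"
    and r: "r \<ge> 1" and m: "maxfun \<Omega> (\<lambda>x. \<bar>f x\<bar> powr r) x = ennreal m" "m \<ge> 0"
  shows "maxfun \<Omega> f x \<le> ennreal (m powr (1/r))"
  unfolding maxfun_def
proof (rule SUP_least)
  fix Q assume "Q \<in> {Q. is_cube Q \<and> Q \<subseteq> \<Omega> \<and> x \<in> Q}"
  then have Q: "is_cube Q" "Q \<subseteq> \<Omega>" "x \<in> Q" by auto
  define c where "c = measure lebesgue Q"
  have c: "c > 0" "emeasure lebesgue Q = ennreal c" "Q \<in> sets lebesgue"
    using is_cube_meas[OF Q(1)] by (auto simp: c_def)
  define f0 where "f0 y = indicator \<Omega> y * f y" for y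
  have f0: "f0 \<in> borel_measurable lebesgue" unfolding f0_def by (rule restrict_meas[OF \<Omega> f])
  have "(\<integral>\<^sup>+ y\<in>Q. ennreal \<bar>\<bar>f y\<bar> powr r\<bar> \<partial>lebesgue) / emeasure lebesgue Q \<le> ennreal m"
    using maxfun_ge_avg[OF Q, of "\<lambda>x. \<bar>f x\<bar> powr r"] m(1) by simp
  then have "(\<integral>\<^sup>+ y\<in>Q. ennreal (\<bar>f0 y\<bar> powr r) \<partial>lebesgue) / ennreal c \<le> ennreal m"
    using c nn_integral_restrict_eq[OF Q(2), of lebesgue "\<lambda>v. \<bar>v\<bar> powr r" f] by (simp add: f0_def)
  then have "(\<integral>\<^sup>+ y\<in>Q. ennreal (\<bar>f0 y\<bar> powr r) \<partial>lebesgue) \<le> ennreal m * ennreal c"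
  proof -
    let ?X = "(\<integral>\<^sup>+ y\<in>Q. ennreal (\<bar>f0 y\<bar> powr r) \<partial>lebesgue)"
    have cc: "ennreal c / ennreal c = 1" using c(1) by (intro ennreal_divide_self) auto
    have "?X = (?X / ennreal c) * ennreal c" by (simp add: ennreal_divide_times cc)
    also have "\<dots> \<le> ennreal m * ennreal c" by (rule mult_right_mono[OF \<open>?X / ennreal c \<le> ennreal m\<close>]) simp
    finally show ?thesis .
  qed
  also have "\<dots> = ennreal (m * c)" using m c by (simp add: ennreal_mult)
  finally have le: "(\<integral>\<^sup>+ y\<in>Q. ennreal (\<bar>f0 y\<bar> powr r) \<partial>lebesgue) \<le> ennreal (m * c)" .
  define A where "A = enn2real (\<integral>\<^sup>+ y\<in>Q. ennreal (\<bar>f0 y\<bar> powr r) \<partial>lebesgue)"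
  have Xt: "(\<integral>\<^sup>+ y\<in>Q. ennreal (\<bar>f0 y\<bar> powr r) \<partial>lebesgue) < top"
    using le ennreal_less_top by (rule le_less_trans)
  have A: "(\<integral>\<^sup>+ y\<in>Q. ennreal (\<bar>f0 y\<bar> powr r) \<partial>lebesgue) = ennreal A" "A \<ge> 0"
    using Xt unfolding A_def by (auto simp: ennreal_enn2real_if)
  have "ennreal A \<le> ennreal (m * c)" using le A(1) by simp
  then have Ale: "A \<le> m * c" using m(2) c(1) by (simp add: ennreal_le_iff)
  have "(\<integral>\<^sup>+ y\<in>Q. ennreal \<bar>f0 y\<bar> \<partial>lebesgue) \<le> ennreal (c * (A/c) powr (1/r))"
    by (rule jensen_set[OF f0 r c(3) c(2) c(1) A])
  also have "\<dots> \<le> ennreal (c * m powr (1/r))"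
  proof -
    have "A / c \<le> m" using Ale c(1) by (simp add: divide_le_eq mult.commute)
    then have "(A/c) powr (1/r) \<le> m powr (1/r)" using A(2) c(1) r by (intro powr_mono2) auto
    then show ?thesis using c(1) by (intro ennreal_leI mult_left_mono) auto
  qed
  finally have "(\<integral>\<^sup>+ y\<in>Q. ennreal \<bar>f y\<bar> \<partial>lebesgue) \<le> ennreal (c * m powr (1/r))"
    using nn_integral_restrict_eq[OF Q(2), of lebesgue "\<lambda>v. \<bar>v\<bar>" f] by (simp add: f0_def)
  then have "(\<integral>\<^sup>+ y\<in>Q. ennreal \<bar>f y\<bar> \<partial>lebesgue) / emeasure lebesgue Q \<le> ennreal (c * m powr (1/r)) / ennreal c"
    unfolding c(2) by (rule divide_right_mono_ennreal)
  also have "\<dots> = ennreal (m powr (1/r))" using c(1) by (simp add: divide_ennreal)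
  finally show "(\<integral>\<^sup>+ y\<in>Q. ennreal \<bar>f y\<bar> \<partial>lebesgue) / emeasure lebesgue Q \<le> ennreal (m powr (1/r))" .
qed

lemma geo_lower:
  fixes lam d l a x y :: real
  assumes "lam = 1 - d/(2*l)" "0 < d" "d \<le> l" "a \<le> x" "x \<le> a + l" "\<bar>y - x\<bar> \<le> d/2"
  shows "y + lam * (a - x) \<le> a + d"
proof -
  have l: "l > 0" using assms by linarith
  have "d/(2*l) > 0" using l assms by simp
  then have lam1: "0 \<le> 1 - lam" using assms by linarith
  have "(1-lam)*(x-a) \<le> (1-lam)*l" using assms lam1 by (intro mult_left_mono) auto
  moreover have "(1-lam)*l = d/2" using assms l by (simp add: field_simps)
  moreover have "y + lam * (a - x) = y - x + a + (1-lam)*(x-a)" by (simp add: algebra_simps)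
  ultimately show ?thesis using assms by linarith
qed

lemma geo_upper:
  fixes lam d l a x y :: real
  assumes "lam = 1 - d/(2*l)" "0 < d" "d \<le> l" "a \<le> x" "x \<le> a + l" "\<bar>y - x\<bar> \<le> d/2"
  shows "a + (l - d) \<le> y + lam * (a - x) + lam * l"
proof -
  have l: "l > 0" using assms by linarith
  have "d/(2*l) > 0" using l assms by simp
  then have lam1: "0 \<le> 1 - lam" using assms by linarith
  have "(1-lam)*(a + l - x) \<le> (1-lam)*l" using assms lam1 by (intro mult_left_mono) auto
  moreover have "(1-lam)*l = d/2" using assms l by (simp add: field_simps)
  moreover have "y + lam * (a - x) + lam * l = y - x + a + l - (1-lam)*(a + l - x)" by (simp add: algebra_simps)
  ultimately show ?thesis using assms by linarith
qed

lemma geo_in: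
  fixes lam l a x y q :: real
  assumes "0 < lam" "y + lam * (a - x) \<le> q" "q \<le> y + lam * (a - x) + lam * l"
  shows "a \<le> x + (q - y)/lam" "x + (q - y)/lam \<le> a + l"
proof -
  have "lam * (a - x) \<le> q - y" using assms by linarith
  then have "a - x \<le> (q - y)/lam" using assms by (simp add: pos_le_divide_eq mult.commute)
  then show "a \<le> x + (q - y)/lam" by linarith
  have "q - y \<le> lam * (a - x + l)" using assms by (simp add: algebra_simps)
  then have "(q - y)/lam \<le> a - x + l" using assms by (simp add: pos_divide_le_eq mult.commute)
  then show "x + (q - y)/lam \<le> a + l" by linarith
qed


lemma emeasure_cbox_One:
  fixes a :: "'a::euclidean_space"
  assumes "l \<ge> 0"
  shows "emeasure lebesgue (cbox a (a + l *\<^sub>R One)) = ennreal (l ^ DIM('a))"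
proof -
  have "emeasure lebesgue (cbox a (a + l *\<^sub>R One)) = emeasure lborel (cbox a (a + l *\<^sub>R One))" by simp
  also have "\<dots> = ennreal (l^DIM('a))"
    using assms unfolding emeasure_lborel_cbox_eq by (simp add: inner_add_left)
  finally show ?thesis .
qed

lemma div_le_imp:
  fixes Y t :: ennreal
  assumes "b > 0" "Y / ennreal b \<le> t"
  shows "Y \<le> t * ennreal b"
proof -
  have cc: "ennreal b / ennreal b = 1" using assms(1) by (intro ennreal_divide_self) auto
  have "Y = (Y / ennreal b) * ennreal b" by (simp add: ennreal_divide_times cc)
  also have "\<dots> \<le> t * ennreal b" by (rule mult_right_mono[OF assms(2)]) simp
  finally show ?thesis .
qed

lemma inner_cubes_SUP:
  fixes a :: "'a::euclidean_space" and G :: "'a \<Rightarrow> ennreal"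
  assumes G: "G \<in> borel_measurable lebesgue" and l: "l > 0"
  shows "(SUP n. \<integral>\<^sup>+ y \<in> cbox (a + (l / (real n + 4)) *\<^sub>R One) (a + (l - l / (real n + 4)) *\<^sub>R One). G y \<partial>lebesgue)
     = (\<integral>\<^sup>+ y \<in> cbox a (a + l *\<^sub>R One). G y \<partial>lebesgue)"
proof -
  define d where "d n = l / (real n + 4)" for n :: nat
  define A where "A n = cbox (a + d n *\<^sub>R One) (a + (l - d n) *\<^sub>R One)" for n
  have dpos: "d n > 0" for n using l by (simp add: d_def)
  have dmono: "d n \<le> d m" if "m \<le> n" for m n
    unfolding d_def using l that by (intro divide_left_mono) auto
  have dsmall: "\<exists>n. d n < e" if e: "e > 0" for e
  proof -
    obtain n :: nat where n: "l / e < real n" using reals_Archimedean2 by blast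
    then have "l < e * real n" using e by (simp add: pos_divide_less_eq mult.commute)
    moreover have "e * real n \<le> e * (real n + 4)" using e by simp
    ultimately have "l < e * (real n + 4)" by linarith
    then have "d n < e" unfolding d_def by (simp add: pos_divide_less_eq mult.commute)
    then show ?thesis by blast
  qed
  have dev: "eventually (\<lambda>n. d n < e) sequentially" if e: "e > 0" for e
  proof -
    obtain N where "d N < e" using dsmall[OF e] by blast
    then show ?thesis unfolding eventually_sequentially using dmono by (meson le_less_trans)
  qed
  have inc: "incseq A" unfolding incseq_def
  proof (intro allI impI subsetI)
    fix m n y assume mn: "m \<le> n" and y: "y \<in> A m"
    then show "y \<in> A n" using dmono[OF mn] unfolding A_def mem_box
      by (auto simp: inner_add_left)
  qed
  have U: "(\<Union>n. A n) = box a (a + l *\<^sub>R One)"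
  proof (intro equalityI subsetI)
    fix y assume "y \<in> (\<Union>n. A n)"
    then obtain n where yn: "y \<in> A n" by auto
    show "y \<in> box a (a + l *\<^sub>R One)" unfolding mem_box
    proof (intro ballI)
      fix b :: 'a assume b: "b \<in> Basis"
      have "a \<bullet> b + d n \<le> y \<bullet> b \<and> y \<bullet> b \<le> a \<bullet> b + (l - d n)"
        using yn b by (simp add: A_def mem_box inner_add_left)
      then show "a \<bullet> b < y \<bullet> b \<and> y \<bullet> b < (a + l *\<^sub>R One) \<bullet> b"
        using dpos[of n] b by (simp add: inner_add_left)
    qed
  next
    fix y assume y: "y \<in> box a (a + l *\<^sub>R One)"
    have "\<forall>b\<in>Basis. eventually (\<lambda>n. d n < min (y \<bullet> b - a \<bullet> b) (a \<bullet> b + l - y \<bullet> b)) sequentially"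
      using y unfolding mem_box by (intro ballI dev) (auto simp: inner_add_left)
    then have "eventually (\<lambda>n. \<forall>b\<in>Basis. d n < min (y \<bullet> b - a \<bullet> b) (a \<bullet> b + l - y \<bullet> b)) sequentially"
      by (intro eventually_ball_finite) auto
    then obtain N where "\<forall>n\<ge>N. \<forall>b\<in>Basis. d n < min (y \<bullet> b - a \<bullet> b) (a \<bullet> b + l - y \<bullet> b)"
      unfolding eventually_sequentially by blast
    then have "\<forall>b\<in>Basis. d N < min (y \<bullet> b - a \<bullet> b) (a \<bullet> b + l - y \<bullet> b)" by blast
    then have "y \<in> A N" unfolding A_def mem_box by (auto simp: inner_add_left)
    then show "y \<in> (\<Union>n. A n)" by auto
  qed
  have Ds: "S \<in> sets lebesgue \<Longrightarrow> (\<integral>\<^sup>+ y \<in> S. G y \<partial>lebesgue) = emeasure (density lebesgue G) S" for S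
    by (simp add: emeasure_density G)
  have "(SUP n. \<integral>\<^sup>+ y \<in> A n. G y \<partial>lebesgue) = (SUP n. emeasure (density lebesgue G) (A n))"
    by (simp add: Ds A_def)
  also have "\<dots> = emeasure (density lebesgue G) (\<Union>n. A n)"
    by (rule SUP_emeasure_incseq[OF _ inc]) (auto simp: A_def)
  also have "\<dots> = (\<integral>\<^sup>+ y \<in> box a (a + l *\<^sub>R One). G y \<partial>lebesgue)"
    by (simp add: U Ds)
  also have "\<dots> = (\<integral>\<^sup>+ y \<in> cbox a (a + l *\<^sub>R One). G y \<partial>lebesgue)"
  proof (rule nn_integral_cong_AE)
    have "cbox a (a + l *\<^sub>R One) - box a (a + l *\<^sub>R One) \<in> null_sets lebesgue"
      using negligible_frontier_interval negligible_iff_null_sets by blast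
    then have "AE y in lebesgue. y \<notin> cbox a (a + l *\<^sub>R One) - box a (a + l *\<^sub>R One)"
      by (rule AE_not_in)
    then show "AE y in lebesgue. G y * indicator (box a (a + l *\<^sub>R One)) y = G y * indicator (cbox a (a + l *\<^sub>R One)) y"
      by eventually_elim (use box_subset_cbox in \<open>auto simp: indicator_def\<close>)
  qed
  finally show ?thesis by (simp add: A_def d_def)
qed


lemma maxfun_lsc:
  fixes \<Omega> :: "'a::euclidean_space set" and g :: "'a \<Rightarrow> real"
  assumes \<Omega>: "\<Omega> = UNIV \<or> is_cube \<Omega>" and g: "g \<in> borel_measurable (restrict_space lebesgue \<Omega>)"
    and x: "x \<in> interior \<Omega>" and t: "t < maxfun \<Omega> g x"
  shows "\<exists>\<epsilon>>0. \<forall>y\<in>ball x \<epsilon>. t < maxfun \<Omega> g y"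
proof -
  from t obtain Q where Q: "Q \<in> {Q. is_cube Q \<and> Q \<subseteq> \<Omega> \<and> x \<in> Q}"
    and tQ: "t < (\<integral>\<^sup>+ y\<in>Q. ennreal \<bar>g y\<bar> \<partial>lebesgue) / emeasure lebesgue Q"
    unfolding maxfun_def less_SUP_iff by blast
  then have Qc: "is_cube Q" "Q \<subseteq> \<Omega>" "x \<in> Q" by auto
  obtain a l where al: "l > 0" "Q = cbox a (a + l *\<^sub>R One)" using Qc(1) unfolding is_cube_def by auto
  define G where "G y = ennreal \<bar>indicator \<Omega> y * g y\<bar>" for y
  have G: "G \<in> borel_measurable lebesgue" unfolding G_def using restrict_meas[OF \<Omega> g] by measurable
  have intG: "(\<integral>\<^sup>+ y\<in>S. ennreal \<bar>g y\<bar> \<partial>lebesgue) = (\<integral>\<^sup>+ y\<in>S. G y \<partial>lebesgue)" if "S \<subseteq> \<Omega>" for S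
    using nn_integral_restrict_eq[OF that, of lebesgue "\<lambda>v. \<bar>v\<bar>" g] by (simp add: G_def)
  define c where "c = l ^ DIM('a)"
  have c1: "emeasure lebesgue Q = ennreal c" unfolding al(2) c_def by (rule emeasure_cbox_One) (use al in simp)
  have c: "c > 0" "emeasure lebesgue Q = ennreal c" using al c1 by (auto simp: c_def)
  have tc: "t * ennreal c < (\<integral>\<^sup>+ y\<in>Q. G y \<partial>lebesgue)"
  proof (rule ccontr)
    assume "\<not> ?thesis"
    then have "(\<integral>\<^sup>+ y\<in>Q. G y \<partial>lebesgue) \<le> ennreal c * t" by (simp add: not_less mult.commute)
    then have "(\<integral>\<^sup>+ y\<in>Q. G y \<partial>lebesgue) / ennreal c \<le> t" using c(1) by (intro divide_le_posI_ennreal) auto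
    then show False using tQ intG[OF Qc(2)] c(2) by simp
  qed
  then have "t * ennreal c < (SUP n. \<integral>\<^sup>+ y \<in> cbox (a + (l / (real n + 4)) *\<^sub>R One) (a + (l - l / (real n + 4)) *\<^sub>R One). G y \<partial>lebesgue)"
    using inner_cubes_SUP[OF G al(1), of a] al(2) by simp
  then obtain n where n: "t * ennreal c < (\<integral>\<^sup>+ y \<in> cbox (a + (l / (real n + 4)) *\<^sub>R One) (a + (l - l / (real n + 4)) *\<^sub>R One). G y \<partial>lebesgue)"
    unfolding less_SUP_iff by blast
  define \<delta> where "\<delta> = l / (real n + 4)"
  have \<delta>: "0 < \<delta>" "\<delta> \<le> l" using al(1) by (auto simp: \<delta>_def field_simps)
  obtain \<rho> where \<rho>: "\<rho> > 0" "ball x \<rho> \<subseteq> \<Omega>"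
    using x by (meson interior_subset open_contains_ball open_interior subset_trans)
  define lam where "lam = 1 - \<delta>/(2*l)"
  have "\<delta>/(2*l) \<le> 1/2" using \<delta> al(1) by (simp add: field_simps)
  moreover have "\<delta>/(2*l) > 0" using \<delta> al(1) by simp
  ultimately have lam: "0 < lam" "lam \<le> 1" "1 - lam > 0" unfolding lam_def by linarith+
  define \<epsilon> where "\<epsilon> = min (\<delta>/2) ((1-lam)*\<rho>)"
  have \<epsilon>: "\<epsilon> > 0" using \<delta> lam \<rho> by (simp add: \<epsilon>_def)
  have cvx: "convex \<Omega>" using \<Omega> unfolding is_cube_def by auto
  show ?thesis
  proof (intro exI[of _ \<epsilon>] conjI ballI)
    show "\<epsilon> > 0" by (rule \<epsilon>)
    fix y assume y: "y \<in> ball x \<epsilon>"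
    have yx: "norm (y - x) < \<epsilon>" using y by (simp add: dist_norm norm_minus_commute)
    have yxb: "\<bar>y \<bullet> b - x \<bullet> b\<bar> \<le> \<delta>/2" if "b \<in> Basis" for b
    proof -
      have "\<bar>(y - x) \<bullet> b\<bar> \<le> norm (y - x)" by (rule Basis_le_norm[OF that])
      moreover have "\<epsilon> \<le> \<delta>/2" by (simp add: \<epsilon>_def)
      ultimately show ?thesis using yx by (simp add: inner_diff_left)
    qed
    have xb: "a \<bullet> b \<le> x \<bullet> b \<and> x \<bullet> b \<le> a \<bullet> b + l" if "b \<in> Basis" for b
      using Qc(3) al(2) that by (simp add: mem_box inner_add_left)
    define a' where "a' = y + lam *\<^sub>R (a - x)"
    define Q' where "Q' = cbox a' (a' + (lam*l) *\<^sub>R One)"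
    have Q'c: "is_cube Q'" unfolding is_cube_def Q'_def using lam al
      by (intro exI[of _ a'] exI[of _ "lam * l"]) simp
    have Q'b: "q \<in> Q' \<longleftrightarrow> (\<forall>b\<in>Basis. y \<bullet> b + lam * (a \<bullet> b - x \<bullet> b) \<le> q \<bullet> b \<and>
          q \<bullet> b \<le> y \<bullet> b + lam * (a \<bullet> b - x \<bullet> b) + lam * l)" for q
      unfolding Q'_def a'_def mem_box by (simp add: inner_add_left inner_diff_left)
    have yQ': "y \<in> Q'" unfolding Q'b
    proof (intro ballI conjI)
      fix b :: 'a assume b: "b \<in> Basis"
      have "lam * (a \<bullet> b - x \<bullet> b) \<le> 0" using xb[OF b] lam by (intro mult_nonneg_nonpos) auto
      moreover have "lam * (a \<bullet> b - x \<bullet> b + l) \<ge> 0" using xb[OF b] lam by (intro mult_nonneg_nonneg) auto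
      ultimately show "y \<bullet> b + lam * (a \<bullet> b - x \<bullet> b) \<le> y \<bullet> b"
        "y \<bullet> b \<le> y \<bullet> b + lam * (a \<bullet> b - x \<bullet> b) + lam * l" by (simp_all add: algebra_simps)
    qed
    have Q'\<Omega>: "Q' \<subseteq> \<Omega>"
    proof
      fix q' assume q': "q' \<in> Q'"
      define q where "q = x + (1/lam) *\<^sub>R (q' - y)"
      have qQ: "q \<in> Q" unfolding al(2) mem_box
      proof (intro ballI)
        fix b :: 'a assume b: "b \<in> Basis"
        have "y \<bullet> b + lam * (a \<bullet> b - x \<bullet> b) \<le> q' \<bullet> b" "q' \<bullet> b \<le> y \<bullet> b + lam * (a \<bullet> b - x \<bullet> b) + lam * l"
          using q' b unfolding Q'b by auto
        from geo_in[OF lam(1) this] show "a \<bullet> b \<le> q \<bullet> b \<and> q \<bullet> b \<le> (a + l *\<^sub>R One) \<bullet> b"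
          using b by (simp add: q_def inner_add_left inner_diff_left)
      qed
      define z where "z = x + (1/(1-lam)) *\<^sub>R (y - x)"
      have "dist x z = norm (y - x) / (1 - lam)" using lam by (simp add: z_def dist_norm)
      also have "\<dots> < \<rho>"
      proof -
        have "norm (y - x) < (1 - lam) * \<rho>" using yx unfolding \<epsilon>_def by linarith
        then show ?thesis using lam by (simp add: pos_divide_less_eq mult.commute)
      qed
      finally have z\<Omega>: "z \<in> \<Omega>" using \<rho>(2) by auto
      have "lam *\<^sub>R q + (1 - lam) *\<^sub>R z = lam *\<^sub>R x + (q' - y) + ((1-lam) *\<^sub>R x + (y - x))"
        using lam unfolding q_def z_def by (simp add: scaleR_add_right)
      also have "\<dots> = q'" by (simp add: algebra_simps)
      finally have "q' = lam *\<^sub>R q + (1 - lam) *\<^sub>R z" by simp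
      then show "q' \<in> \<Omega>" using cvx qQ Qc(2) z\<Omega> lam unfolding convex_def by auto
    qed
    have sub: "cbox (a + \<delta> *\<^sub>R One) (a + (l - \<delta>) *\<^sub>R One) \<subseteq> Q'"
    proof
      fix p assume p: "p \<in> cbox (a + \<delta> *\<^sub>R One) (a + (l - \<delta>) *\<^sub>R One)"
      show "p \<in> Q'" unfolding Q'b
      proof (intro ballI conjI)
        fix b :: 'a assume b: "b \<in> Basis"
        have pb: "a \<bullet> b + \<delta> \<le> p \<bullet> b" "p \<bullet> b \<le> a \<bullet> b + (l - \<delta>)"
          using p b by (auto simp: mem_box inner_add_left)
        have "y \<bullet> b + lam * (a \<bullet> b - x \<bullet> b) \<le> a \<bullet> b + \<delta>"
          by (rule geo_lower[OF lam_def \<delta> _ _ yxb[OF b]]) (use xb[OF b] in auto)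
        then show "y \<bullet> b + lam * (a \<bullet> b - x \<bullet> b) \<le> p \<bullet> b" using pb by linarith
        have "a \<bullet> b + (l - \<delta>) \<le> y \<bullet> b + lam * (a \<bullet> b - x \<bullet> b) + lam * l"
          by (rule geo_upper[OF lam_def \<delta> _ _ yxb[OF b]]) (use xb[OF b] in auto)
        then show "p \<bullet> b \<le> y \<bullet> b + lam * (a \<bullet> b - x \<bullet> b) + lam * l" using pb by linarith
      qed
    qed
    define c' where "c' = (lam*l)^DIM('a)"
    have mQ': "emeasure lebesgue Q' = ennreal c'"
      unfolding Q'_def c'_def using lam al by (intro emeasure_cbox_One) auto
    have c'pos: "c' > 0" unfolding c'_def using lam al by simp
    have c'le: "c' \<le> c" unfolding c'_def c_def
    proof (rule power_mono)
      show "lam * l \<le> l" using lam al mult_right_mono[of lam 1 l] by simp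
    qed (use lam al in simp)
    have big: "t * ennreal c < (\<integral>\<^sup>+ y\<in>Q'. G y \<partial>lebesgue)"
    proof -
      have "(\<integral>\<^sup>+ y \<in> cbox (a + \<delta> *\<^sub>R One) (a + (l - \<delta>) *\<^sub>R One). G y \<partial>lebesgue) \<le> (\<integral>\<^sup>+ y\<in>Q'. G y \<partial>lebesgue)"
        using sub by (intro nn_integral_mono) (auto simp: indicator_def)
      then show ?thesis using n unfolding \<delta>_def by (rule less_le_trans[rotated])
    qed
    have avg: "t < (\<integral>\<^sup>+ y\<in>Q'. ennreal \<bar>g y\<bar> \<partial>lebesgue) / emeasure lebesgue Q'"
    proof (rule ccontr)
      assume "\<not> ?thesis"
      then have "(\<integral>\<^sup>+ y\<in>Q'. G y \<partial>lebesgue) / ennreal c' \<le> t" using mQ' intG[OF Q'\<Omega>] by simp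
      then have "(\<integral>\<^sup>+ y\<in>Q'. G y \<partial>lebesgue) \<le> t * ennreal c'" by (rule div_le_imp[OF c'pos])
      also have "\<dots> \<le> t * ennreal c" using c'le by (intro mult_left_mono ennreal_leI) auto
      finally show False using big by simp
    qed
    show "t < maxfun \<Omega> g y" using avg maxfun_ge_avg[OF Q'c Q'\<Omega> yQ'] by (rule less_le_trans)
  qed
qed

lemma maxfun_meas:
  fixes \<Omega> :: "'a::euclidean_space set" and g :: "'a \<Rightarrow> real"
  assumes \<Omega>: "\<Omega> = UNIV \<or> is_cube \<Omega>" and g: "g \<in> borel_measurable (restrict_space lebesgue \<Omega>)"
  shows "(\<lambda>x. enn2real (maxfun \<Omega> g x)) \<in> borel_measurable (restrict_space lebesgue \<Omega>)"
proof -
  define G' where "G' x = (if x \<in> interior \<Omega> then maxfun \<Omega> g x else 0)" for x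
  have "G' \<in> borel_measurable borel"
  proof (rule borel_measurableI_greater)
    fix t :: ennreal
    have eq: "{x \<in> space borel. t < G' x} = {x \<in> interior \<Omega>. t < maxfun \<Omega> g x}" by (auto simp: G'_def)
    have "open {x \<in> interior \<Omega>. t < maxfun \<Omega> g x}"
      unfolding open_contains_ball
    proof (intro ballI)
      fix x assume x: "x \<in> {x \<in> interior \<Omega>. t < maxfun \<Omega> g x}"
      obtain \<epsilon> where e: "\<epsilon> > 0" "\<forall>y\<in>ball x \<epsilon>. t < maxfun \<Omega> g y"
        using maxfun_lsc[OF \<Omega> g, of x t] x by blast
      obtain \<rho> where r: "\<rho> > 0" "ball x \<rho> \<subseteq> interior \<Omega>"
        using x open_interior open_contains_ball by blast
      show "\<exists>e>0. ball x e \<subseteq> {x \<in> interior \<Omega>. t < maxfun \<Omega> g x}"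
        using e r by (intro exI[of _ "min \<epsilon> \<rho>"]) auto
    qed
    then show "{x \<in> space borel. t < G' x} \<in> sets borel" unfolding eq by (rule borel_open)
  qed
  then have "G' \<in> borel_measurable lborel" by simp
  then have "G' \<in> borel_measurable lebesgue" by (rule measurable_completion)
  then have m1: "(\<lambda>x. enn2real (G' x)) \<in> borel_measurable lebesgue" by measurable
  have "\<Omega> - interior \<Omega> \<in> null_sets lebesgue"
    using omega_frontier[OF \<Omega>] negligible_iff_null_sets by blast
  then have "AE x in lebesgue. x \<notin> \<Omega> - interior \<Omega>" by (rule AE_not_in)
  then have "AE x in lebesgue. enn2real (G' x) = indicat_real \<Omega> x *\<^sub>R enn2real (maxfun \<Omega> g x)"
    by eventually_elim (use interior_subset in \<open>auto simp: G'_def indicator_def\<close>)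
  from borel_measurable_AE[OF m1 this]
  have "(\<lambda>x. indicat_real \<Omega> x *\<^sub>R enn2real (maxfun \<Omega> g x)) \<in> borel_measurable lebesgue" .
  moreover have O: "\<Omega> \<inter> space lebesgue \<in> sets lebesgue" using omega_sets[OF \<Omega>] by simp
  ultimately show ?thesis using borel_measurable_restrict_space_iff[OF O] by blast
qed


lemma le_enn2real:
  fixes a :: real and X :: ennreal
  assumes "ennreal a \<le> X" "X < top"
  shows "a \<le> enn2real X"
proof (cases "a \<ge> 0")
  case True
  then have "enn2real (ennreal a) \<le> enn2real X" using assms by (intro enn2real_mono) auto
  then show ?thesis using True by simp
next
  case False
  then show ?thesis using enn2real_nonneg[of X] by linarith
qed

lemma maxfun_mono:
  assumes "AE y in lebesgue. y \<in> \<Omega> \<longrightarrow> \<bar>h y\<bar> \<le> \<bar>w y\<bar>"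
  shows "maxfun \<Omega> h x \<le> maxfun \<Omega> w x"
  unfolding maxfun_def
proof (rule SUP_mono)
  fix Q assume Q: "Q \<in> {Q. is_cube Q \<and> Q \<subseteq> \<Omega> \<and> x \<in> Q}"
  have "(\<integral>\<^sup>+ y\<in>Q. ennreal \<bar>h y\<bar> \<partial>lebesgue) \<le> (\<integral>\<^sup>+ y\<in>Q. ennreal \<bar>w y\<bar> \<partial>lebesgue)"
    using assms
  proof (intro nn_integral_mono_AE, eventually_elim)
    case (elim y)
    then show ?case using Q by (auto simp: indicator_def)
  qed
  then show "\<exists>m\<in>{Q. is_cube Q \<and> Q \<subseteq> \<Omega> \<and> x \<in> Q}.
       (\<integral>\<^sup>+ y\<in>Q. ennreal \<bar>h y\<bar> \<partial>lebesgue) / emeasure lebesgue Q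
       \<le> (\<integral>\<^sup>+ y\<in>m. ennreal \<bar>w y\<bar> \<partial>lebesgue) / emeasure lebesgue m"
    using Q by (intro bexI[of _ Q] divide_right_mono_ennreal)
qed

lemma maxfun_cmult:
  fixes w :: "'a::euclidean_space \<Rightarrow> real"
  assumes c: "c \<ge> 0" and w: "\<forall>Q. is_cube Q \<and> Q \<subseteq> \<Omega> \<longrightarrow> set_integrable lebesgue Q w"
  shows "maxfun \<Omega> (\<lambda>x. c * w x) x = ennreal c * maxfun \<Omega> w x"
  unfolding maxfun_def SUP_mult_left_ennreal
proof (rule SUP_cong[OF refl])
  fix Q assume Q: "Q \<in> {Q. is_cube Q \<and> Q \<subseteq> \<Omega> \<and> x \<in> Q}"
  then have "set_integrable lebesgue Q w" using w by auto
  then have m: "(\<lambda>y. indicator Q y *\<^sub>R w y) \<in> borel_measurable lebesgue"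
    unfolding set_integrable_def by (rule borel_measurable_integrable)
  have "(\<integral>\<^sup>+ y\<in>Q. ennreal \<bar>c * w y\<bar> \<partial>lebesgue) = (\<integral>\<^sup>+ y. ennreal c * ennreal \<bar>indicator Q y *\<^sub>R w y\<bar> \<partial>lebesgue)"
    using c by (intro nn_integral_cong) (auto simp: indicator_def abs_mult ennreal_mult)
  also have "\<dots> = ennreal c * (\<integral>\<^sup>+ y. ennreal \<bar>indicator Q y *\<^sub>R w y\<bar> \<partial>lebesgue)"
  proof (rule nn_integral_cmult)
    have "(\<lambda>v::real. ennreal \<bar>v\<bar>) \<in> borel_measurable borel" by measurable
    then show "(\<lambda>y. ennreal \<bar>indicator Q y *\<^sub>R w y\<bar>) \<in> borel_measurable lebesgue"
      using measurable_compose[OF m] by blast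
  qed
  also have "(\<integral>\<^sup>+ y. ennreal \<bar>indicator Q y *\<^sub>R w y\<bar> \<partial>lebesgue) = (\<integral>\<^sup>+ y\<in>Q. ennreal \<bar>w y\<bar> \<partial>lebesgue)"
    by (intro nn_integral_cong) (auto simp: indicator_def)
  finally show "(\<integral>\<^sup>+ y\<in>Q. ennreal \<bar>c * w y\<bar> \<partial>lebesgue) / emeasure lebesgue Q =
      ennreal c * ((\<integral>\<^sup>+ y\<in>Q. ennreal \<bar>w y\<bar> \<partial>lebesgue) / emeasure lebesgue Q)"
    by (simp add: ennreal_times_divide)
qed

lemma A1_cmult:
  assumes w: "w \<in> A1 \<Omega>" and c: "c > 0"
  shows "(\<lambda>x. c * w x) \<in> A1 \<Omega>"
proof -
  from w have W: "weight \<Omega> w" and "\<exists>C::real. AE x in lebesgue. x \<in> \<Omega> \<longrightarrow> maxfun \<Omega> w x \<le> ennreal C * ennreal (w x)"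
    unfolding A1_def by auto
  then obtain C :: real where C: "AE x in lebesgue. x \<in> \<Omega> \<longrightarrow> maxfun \<Omega> w x \<le> ennreal C * ennreal (w x)" by blast
  have pos: "AE x in lebesgue. x \<in> \<Omega> \<longrightarrow> w x > 0" and int: "\<forall>Q. is_cube Q \<and> Q \<subseteq> \<Omega> \<longrightarrow> set_integrable lebesgue Q w"
    using W unfolding weight_def by auto
  have "weight \<Omega> (\<lambda>x. c * w x)" unfolding weight_def
  proof
    show "AE x in lebesgue. x \<in> \<Omega> \<longrightarrow> c * w x > 0" using pos by eventually_elim (use c in auto)
    show "\<forall>Q. is_cube Q \<and> Q \<subseteq> \<Omega> \<longrightarrow> set_integrable lebesgue Q (\<lambda>x. c * w x)"
      using int by auto
  qed
  moreover have "AE x in lebesgue. x \<in> \<Omega> \<longrightarrow> maxfun \<Omega> (\<lambda>x. c * w x) x \<le> ennreal C * ennreal (c * w x)"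
    using C pos
  proof eventually_elim
    case (elim x)
    show ?case
    proof
      assume x: "x \<in> \<Omega>"
      have "maxfun \<Omega> (\<lambda>x. c * w x) x = ennreal c * maxfun \<Omega> w x"
        using c int by (intro maxfun_cmult) auto
      also have "\<dots> \<le> ennreal c * (ennreal C * ennreal (w x))"
        using elim x by (intro mult_left_mono) auto
      also have "\<dots> = ennreal C * ennreal (c * w x)"
        using c elim x by (simp add: ennreal_mult mult_ac)
      finally show "maxfun \<Omega> (\<lambda>x. c * w x) x \<le> ennreal C * ennreal (c * w x)" .
    qed
  qed
  ultimately show ?thesis unfolding A1_def by blast
qed


lemma lt_inf_top: "(X::ennreal) < \<infinity> \<Longrightarrow> X < top" by (simp add: infinity_ennreal_def)

theorem mainTheorem15:
  fixes \<Omega> :: "'a::euclidean_space set" and f :: "'a \<Rightarrow> real" and r :: real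
  assumes "\<Omega> = UNIV \<or> is_cube \<Omega>"
    and "r \<ge> 1"
    and "f \<in> borel_measurable (restrict_space lebesgue \<Omega>)"
  shows "(MA1 r \<Omega> f \<longleftrightarrow> MA1_ext 1 \<Omega> (maxfun \<Omega> (\<lambda>x. \<bar>f x\<bar> powr r)))
       \<and> (MA1_ext 1 \<Omega> (maxfun \<Omega> (\<lambda>x. \<bar>f x\<bar> powr r)) \<longleftrightarrow> MA1_ext r \<Omega> (maxfun \<Omega> f))"
proof -
  note \<Omega> = assms(1) and r = assms(2) and fm = assms(3)
  define h where "h x = \<bar>f x\<bar> powr r" for x
  have hm: "h \<in> borel_measurable (restrict_space lebesgue \<Omega>)" unfolding h_def using fm by measurable
  have h_eq: "(\<lambda>x. \<bar>f x\<bar> powr r) = h" by (simp add: h_def fun_eq_iff)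
  have h0: "h x \<ge> 0" for x by (simp add: h_def)
  have I2: "MA1_ext 1 \<Omega> (maxfun \<Omega> h)" if P1: "MA1 r \<Omega> f"
  proof -
    from P1 obtain w where w: "w \<in> A1 \<Omega>" and fw: "AE x in lebesgue. x \<in> \<Omega> \<longrightarrow> \<bar>f x\<bar> powr r \<le> w x"
      unfolding MA1_def by auto
    from w obtain C :: real where C: "AE x in lebesgue. x \<in> \<Omega> \<longrightarrow> maxfun \<Omega> w x \<le> ennreal C * ennreal (w x)"
      unfolding A1_def by auto
    have pos: "AE x in lebesgue. x \<in> \<Omega> \<longrightarrow> w x > 0" using w unfolding A1_def weight_def by auto
    define c where "c = max C 1"
    have c0: "c > 0" "C \<le> c" by (auto simp: c_def)
    have w': "(\<lambda>x. c * w x) \<in> A1 \<Omega>" by (rule A1_cmult[OF w c0(1)])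
    have hw: "AE y in lebesgue. y \<in> \<Omega> \<longrightarrow> \<bar>h y\<bar> \<le> \<bar>w y\<bar>"
      using fw by eventually_elim (auto simp: h_def)
    have key: "AE x in lebesgue. x \<in> \<Omega> \<longrightarrow> maxfun \<Omega> h x \<le> ennreal (c * w x)"
      using C pos
    proof eventually_elim
      case (elim x)
      show ?case
      proof
        assume x: "x \<in> \<Omega>"
        have "maxfun \<Omega> h x \<le> maxfun \<Omega> w x" by (rule maxfun_mono[OF hw])
        also have "\<dots> \<le> ennreal C * ennreal (w x)" using elim x by auto
        also have "\<dots> \<le> ennreal c * ennreal (w x)" using c0 by (intro mult_right_mono ennreal_leI) auto
        also have "\<dots> = ennreal (c * w x)" using c0 elim x by (simp add: ennreal_mult)
        finally show "maxfun \<Omega> h x \<le> ennreal (c * w x)" .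
      qed
    qed
    show ?thesis unfolding MA1_ext_def MA1_def
    proof (intro conjI bexI[of _ "\<lambda>x. c * w x"])
      show "AE x in lebesgue. x \<in> \<Omega> \<longrightarrow> maxfun \<Omega> h x < \<infinity>"
        using key by eventually_elim (auto intro: le_less_trans simp: infinity_ennreal_def)
      show "(\<lambda>x. enn2real (maxfun \<Omega> h x)) \<in> borel_measurable (restrict_space lebesgue \<Omega>)"
        by (rule maxfun_meas[OF \<Omega> hm])
      show "(\<lambda>x. c * w x) \<in> A1 \<Omega>" by (rule w')
      show "AE x in lebesgue. x \<in> \<Omega> \<longrightarrow> \<bar>enn2real (maxfun \<Omega> h x)\<bar> powr 1 \<le> c * w x"
        using key pos
      proof eventually_elim
        case (elim x)
        then show ?case using c0 by (auto intro!: enn2real_leI)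
      qed
    qed
  qed
  have II1: "MA1 r \<Omega> f" if P2: "MA1_ext 1 \<Omega> (maxfun \<Omega> h)"
  proof -
    from P2 have fin: "AE x in lebesgue. x \<in> \<Omega> \<longrightarrow> maxfun \<Omega> h x < \<infinity>"
      and "\<exists>w\<in>A1 \<Omega>. AE x in lebesgue. x \<in> \<Omega> \<longrightarrow> \<bar>enn2real (maxfun \<Omega> h x)\<bar> powr 1 \<le> w x"
      unfolding MA1_ext_def MA1_def by auto
    then obtain w where w: "w \<in> A1 \<Omega>" and wb: "AE x in lebesgue. x \<in> \<Omega> \<longrightarrow> \<bar>enn2real (maxfun \<Omega> h x)\<bar> powr 1 \<le> w x"
      by blast
    have ge: "AE x in lebesgue. x \<in> \<Omega> \<longrightarrow> ennreal \<bar>h x\<bar> \<le> maxfun \<Omega> h x" by (rule maxfun_ge[OF \<Omega> hm])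
    have "AE x in lebesgue. x \<in> \<Omega> \<longrightarrow> \<bar>f x\<bar> powr r \<le> w x"
      using fin wb ge
    proof eventually_elim
      case (elim x)
      show ?case
      proof
        assume x: "x \<in> \<Omega>"
        have "\<bar>h x\<bar> \<le> enn2real (maxfun \<Omega> h x)"
          using elim x by (intro le_enn2real) (auto intro: lt_inf_top)
        also have "\<dots> \<le> w x" using elim x by simp
        finally show "\<bar>f x\<bar> powr r \<le> w x" using h0[of x] by (simp add: h_def)
      qed
    qed
    then show ?thesis unfolding MA1_def using fm w by blast
  qed
  have II3: "MA1_ext r \<Omega> (maxfun \<Omega> f)" if P2: "MA1_ext 1 \<Omega> (maxfun \<Omega> h)"
  proof -
    from P2 have fin: "AE x in lebesgue. x \<in> \<Omega> \<longrightarrow> maxfun \<Omega> h x < \<infinity>"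
      and "\<exists>w\<in>A1 \<Omega>. AE x in lebesgue. x \<in> \<Omega> \<longrightarrow> \<bar>enn2real (maxfun \<Omega> h x)\<bar> powr 1 \<le> w x"
      unfolding MA1_ext_def MA1_def by auto
    then obtain w where w: "w \<in> A1 \<Omega>" and wb: "AE x in lebesgue. x \<in> \<Omega> \<longrightarrow> \<bar>enn2real (maxfun \<Omega> h x)\<bar> powr 1 \<le> w x"
      by blast
    have key: "AE x in lebesgue. x \<in> \<Omega> \<longrightarrow> maxfun \<Omega> f x < \<infinity> \<and> \<bar>enn2real (maxfun \<Omega> f x)\<bar> powr r \<le> w x"
      using fin wb
    proof eventually_elim
      case (elim x)
      show ?case
      proof
        assume x: "x \<in> \<Omega>"
        define m where "m = enn2real (maxfun \<Omega> h x)"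
        have m0: "m \<ge> 0" by (simp add: m_def)
        have mh: "maxfun \<Omega> (\<lambda>x. \<bar>f x\<bar> powr r) x = ennreal m"
          using elim x unfolding m_def h_eq by (simp add: ennreal_enn2real_if infinity_ennreal_def)
        have Mf: "maxfun \<Omega> f x \<le> ennreal (m powr (1/r))"
          by (rule maxfun_jensen[OF \<Omega> fm r mh m0])
        have "enn2real (maxfun \<Omega> f x) \<le> m powr (1/r)" using Mf by (intro enn2real_leI) auto
        then have "enn2real (maxfun \<Omega> f x) powr r \<le> (m powr (1/r)) powr r"
          using r by (intro powr_mono2) auto
        also have "\<dots> = m" using m0 r by (simp add: powr_powr)
        also have "\<dots> \<le> w x" using elim x m0 by (simp add: m_def)
        finally have "\<bar>enn2real (maxfun \<Omega> f x)\<bar> powr r \<le> w x" by simp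
        moreover have "maxfun \<Omega> f x < \<infinity>" using Mf
          by (auto intro: le_less_trans simp: infinity_ennreal_def)
        ultimately show "maxfun \<Omega> f x < \<infinity> \<and> \<bar>enn2real (maxfun \<Omega> f x)\<bar> powr r \<le> w x" by simp
      qed
    qed
    show ?thesis unfolding MA1_ext_def MA1_def
    proof (intro conjI bexI[of _ w])
      show "AE x in lebesgue. x \<in> \<Omega> \<longrightarrow> maxfun \<Omega> f x < \<infinity>" using key by eventually_elim auto
      show "(\<lambda>x. enn2real (maxfun \<Omega> f x)) \<in> borel_measurable (restrict_space lebesgue \<Omega>)"
        by (rule maxfun_meas[OF \<Omega> fm])
      show "w \<in> A1 \<Omega>" by (rule w)
      show "AE x in lebesgue. x \<in> \<Omega> \<longrightarrow> \<bar>enn2real (maxfun \<Omega> f x)\<bar> powr r \<le> w x"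
        using key by eventually_elim auto
    qed
  qed
  have III1: "MA1 r \<Omega> f" if P3: "MA1_ext r \<Omega> (maxfun \<Omega> f)"
  proof -
    from P3 have fin: "AE x in lebesgue. x \<in> \<Omega> \<longrightarrow> maxfun \<Omega> f x < \<infinity>"
      and "\<exists>w\<in>A1 \<Omega>. AE x in lebesgue. x \<in> \<Omega> \<longrightarrow> \<bar>enn2real (maxfun \<Omega> f x)\<bar> powr r \<le> w x"
      unfolding MA1_ext_def MA1_def by auto
    then obtain w where w: "w \<in> A1 \<Omega>" and wb: "AE x in lebesgue. x \<in> \<Omega> \<longrightarrow> \<bar>enn2real (maxfun \<Omega> f x)\<bar> powr r \<le> w x"
      by blast
    have ge: "AE x in lebesgue. x \<in> \<Omega> \<longrightarrow> ennreal \<bar>f x\<bar> \<le> maxfun \<Omega> f x" by (rule maxfun_ge[OF \<Omega> fm])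
    have "AE x in lebesgue. x \<in> \<Omega> \<longrightarrow> \<bar>f x\<bar> powr r \<le> w x"
      using fin wb ge
    proof eventually_elim
      case (elim x)
      show ?case
      proof
        assume x: "x \<in> \<Omega>"
        have "\<bar>f x\<bar> \<le> enn2real (maxfun \<Omega> f x)"
          using elim x by (intro le_enn2real) (auto intro: lt_inf_top)
        then have "\<bar>f x\<bar> powr r \<le> enn2real (maxfun \<Omega> f x) powr r"
          using r by (intro powr_mono2) auto
        also have "\<dots> \<le> w x" using elim x by simp
        finally show "\<bar>f x\<bar> powr r \<le> w x" .
      qed
    qed
    then show ?thesis unfolding MA1_def using fm w by blast
  qed
  show ?thesis unfolding h_eq using I2 II1 II3 III1 by blast
qed

end
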